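(* Let $A$ be a set (the assembly) and let $\mathcal{E}$ be a set of subsets of $A$ (the efficacious coalitions) such that (C1) for every $K\subseteq A$, $K\in\mathcal{E}$ if and only if $A\setminus K\notin\mathcal{E}$; and (C2) if $K\in\mathcal{E}$ and $K\subseteq L\subseteq A$, then $L\in\mathcal{E}$. Suppose each member of $A$ chooses one of the six strict total orders on three candidates $a,b,c$, labelled by $\mathbb{Z}/6\mathbb{Z}$ as follows: $1: a>b>c$, $2: a>c>b$, $3: c>a>b$, $4: c>b>a$, $5: b>c>a$, $6: b>a>c$. For $p\in\mathbb{Z}/6\mathbb{Z}$ let $K(p)$ be the set of members who chose ranking $p$, and write $K(p,q)=K(p)\cup K(q)$. Suppose the following condition (S) holds: there exists $p\in\mathbb{Z}/6\mathbb{Z}$ such that $K(p,p+1)=\emptyset$ or $K(p,p+3)=\emptyset$. Then condition (T) holds: there exists $p\in\mathbb{Z}/6\mathbb{Z}$ such that $K(p,p+1)\in\mathcal{E}$.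
   Context: Indices of $K(\cdot)$ are taken modulo $6$. The sets $K(1),\dots,K(6)$ partition $A$. *)

theory Defs
  imports Main
begin

(* The six rankings are labelled by Z/6Z, represented by residues 0..5 of int
   (label 6 corresponds to residue 0). ch x is the ranking chosen by member x. *)
definition K :: "'m set \<Rightarrow> ('m \<Rightarrow> int) \<Rightarrow> int \<Rightarrow> 'm set" where
  "K A ch p = {x \<in> A. ch x = p mod 6}"

definition K2 :: "'m set \<Rightarrow> ('m \<Rightarrow> int) \<Rightarrow> int \<Rightarrow> int \<Rightarrow> 'm set" where
  "K2 A ch p q = K A ch p \<union> K A ch q"

end

theory Submission
  imports Defs
begin

lemma modk: "((q::int)+k) mod 6 = (q mod 6 + k) mod 6" by (simp add: mod_add_left_eq)
lemma r6: "(q::int) mod 6 \<in> {0,1,2,3,4,5}" proof -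
  have "0 \<le> q mod 6" "q mod 6 < 6" by auto
  then show ?thesis by auto qed
lemma six_cases:
  fixes c q :: int
  assumes "c \<in> {0..5}"
  shows "c = q mod 6 \<or> c = (q+1) mod 6 \<or> c = (q+2) mod 6 \<or> c = (q+3) mod 6 \<or> c = (q+4) mod 6 \<or> c = (q+5) mod 6"
  using assms r6[of q] unfolding modk[of q] by auto
lemma distinct6:
  fixes q :: int
  shows "q mod 6 \<noteq> (q+1) mod 6 \<and> q mod 6 \<noteq> (q+2) mod 6 \<and> q mod 6 \<noteq> (q+3) mod 6 \<and> q mod 6 \<noteq> (q+4) mod 6 \<and> q mod 6 \<noteq> (q+5) mod 6
   \<and> (q+1) mod 6 \<noteq> (q+2) mod 6 \<and> (q+1) mod 6 \<noteq> (q+3) mod 6 \<and> (q+1) mod 6 \<noteq> (q+4) mod 6 \<and> (q+1) mod 6 \<noteq> (q+5) mod 6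
   \<and> (q+2) mod 6 \<noteq> (q+3) mod 6 \<and> (q+2) mod 6 \<noteq> (q+4) mod 6 \<and> (q+2) mod 6 \<noteq> (q+5) mod 6
   \<and> (q+3) mod 6 \<noteq> (q+4) mod 6 \<and> (q+3) mod 6 \<noteq> (q+5) mod 6 \<and> (q+4) mod 6 \<noteq> (q+5) mod 6"
  using r6[of q] unfolding modk[of q] by auto

lemma compl_split:
  assumes "\<forall>x\<in>A. ch x \<in> {0..5}"
  shows "A - K2 A ch q (q+1) = K2 A ch (q+2) (q+3) \<union> K2 A ch (q+4) (q+5)"
proof -
  have "\<And>x. x \<in> A \<Longrightarrow> ch x = q mod 6 \<or> ch x = (q+1) mod 6 \<or> ch x = (q+2) mod 6 \<or> ch x = (q+3) mod 6 \<or> ch x = (q+4) mod 6 \<or> ch x = (q+5) mod 6"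
    using assms six_cases by blast
  then show ?thesis using distinct6[of q] unfolding K2_def K_def by auto
qed

theorem mainTheorem1:
  fixes A :: "'m set" and E :: "'m set set" and ch :: "'m \<Rightarrow> int"
  assumes E_sub: "\<forall>K\<in>E. K \<subseteq> A"
    and C1: "\<forall>K. K \<subseteq> A \<longrightarrow> (K \<in> E \<longleftrightarrow> A - K \<notin> E)"
    and C2: "\<forall>K L. K \<in> E \<and> K \<subseteq> L \<and> L \<subseteq> A \<longrightarrow> L \<in> E"
    and ch_range: "\<forall>x\<in>A. ch x \<in> {0..5}"
    and S: "\<exists>p::int. K2 A ch p (p + 1) = {} \<or> K2 A ch p (p + 3) = {}"
  shows "\<exists>p::int. K2 A ch p (p + 1) \<in> E"
proof -
  have sub: "\<And>p q. K2 A ch p q \<subseteq> A" unfolding K2_def K_def by auto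
  obtain p where hp: "K2 A ch p (p + 1) = {} \<or> K2 A ch p (p + 3) = {}" using S by blast
  have key: "\<And>X Y. X \<subseteq> A \<Longrightarrow> A - X = Y \<Longrightarrow> X \<in> E \<or> Y \<in> E" using C1 by blast
  show ?thesis
  proof (cases "K2 A ch p (p + 1) = {}")
    case True
    have e: "A - K2 A ch (p+2) (p+2+1) = K2 A ch (p+4) (p+4+1)"
    proof -
      have e7: "p + 7 = (p+1) + 6" by simp
      have m6: "K A ch (p+6) = K A ch p" "K A ch (p+7) = K A ch (p+1)" unfolding K_def
        by (simp, simp only: e7 mod_add_self2)
      have "A - K2 A ch (p+2) (p+2+1) = K2 A ch (p+4) (p+5) \<union> K2 A ch (p+6) (p+7)"
        using compl_split[OF ch_range, of "p+2"] by (simp add: ac_simps)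
      then show ?thesis using True unfolding K2_def m6 by (simp add: ac_simps)
    qed
    from key[OF sub e] show ?thesis by blast
  next
    case False
    with hp have T: "K2 A ch p (p + 3) = {}" by simp
    have s: "A - K2 A ch (p+1) (p+1+1) = K2 A ch (p+3) (p+4) \<union> K2 A ch (p+5) (p+6)"
      using compl_split[OF ch_range, of "p+1"] by (simp add: ac_simps)
    have m: "\<And>r. K A ch (r+6) = K A ch r" unfolding K_def by simp
    have e: "A - K2 A ch (p+1) (p+1+1) = K2 A ch (p+4) (p+4+1)"
      using s T unfolding K2_def m by (auto simp: ac_simps)
    from key[OF sub e] show ?thesis by blast
  qed
qed

end
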